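(* Let $h$ be the $11$-uniform morphism on $\{0,1,2,3\}$ given by $h(0)=01312021310$, $h(1)=12023132021$, $h(2)=23130203132$, $h(3)=30201310203$. Every factor of the infinite fixed point $h^\omega(0)$ that is a $\tfrac32$-power (i.e., of length $p$ with period $q$ where $p/q=3/2$) has length $a\cdot 11^i$ for some $a\in\{3,6,9,12\}$ and integer $i\ge0$.
   Context: A word $x=x[1..n]$ has period $q$ if $x[i]=x[i+q]$ for $1\le i\le n-q$. For integers $p>q\ge1$, $x$ is a $(p/q)$-power if it has length $p$ and period $q$. *)

theory Defs
  imports Main
begin

fun h_letter :: "nat \<Rightarrow> nat list" where
  "h_letter a =
     (if a = 0 then [0,1,3,1,2,0,2,1,3,1,0]
      else if a = 1 then [1,2,0,2,3,1,3,2,0,2,1]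
      else if a = 2 then [2,3,1,3,0,2,0,3,1,3,2]
      else [3,0,2,0,1,3,1,0,2,0,3])"

definition h_word :: "nat list \<Rightarrow> nat list" where
  "h_word w = concat (map h_letter w)"

text \<open>The infinite fixed point h^omega(0), as a function from positions
  (0-based) to letters: its n-th letter is the n-th letter of h^(n+1)(0),
  a word of length 11^(n+1) > n; the words h^k(0) are successive prefixes.\<close>
definition h_fix :: "nat \<Rightarrow> nat" where
  "h_fix n = ((h_word ^^ (Suc n)) [0]) ! n"

definition factor_has_period :: "(nat \<Rightarrow> 'a) \<Rightarrow> nat \<Rightarrow> nat \<Rightarrow> nat \<Rightarrow> bool" where
  "factor_has_period x i p q \<longleftrightarrow> (\<forall>j. j + q < p \<longrightarrow> x (i + j) = x (i + j + q))"

end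

theory Submission
  imports Defs
begin

definition cc :: "nat list" where "cc = [0,1,3,1,2,0,2,1,3,1,0]"

definition ww :: "nat \<Rightarrow> nat list" where "ww k = (h_word ^^ k) [0]"

lemma len_h_letter[simp]: "length (h_letter a) = 11"
  by simp

lemma h_word_Cons[simp]: "h_word (a # w) = h_letter a @ h_word w"
  by (simp add: h_word_def)

lemma h_word_append: "h_word (u @ v) = h_word u @ h_word v"
  by (simp add: h_word_def)

lemma h_word_Nil[simp]: "h_word [] = []"
  by (simp add: h_word_def)

lemma len_h_word[simp]: "length (h_word w) = 11 * length w"
  by (induction w) auto

lemma nth_h_word: "t < length w \<Longrightarrow> j < 11 \<Longrightarrow> h_word w ! (11*t + j) = h_letter (w!t) ! j"
proof (induction w arbitrary: t)
  case Nil then show ?case by simp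
next
  case (Cons a w)
  show ?case
  proof (cases t)
    case 0 then show ?thesis using Cons by (simp add: nth_append)
  next
    case (Suc t')
    have "11 * t + j = 11 + (11*t' + j)" using Suc by simp
    then show ?thesis using Cons Suc by (simp add: nth_append)
  qed
qed

lemma ww_Suc: "ww (Suc k) = h_word (ww k)"
  by (simp add: ww_def)

lemma len_ww: "length (ww k) = 11 ^ k"
  by (induction k) (auto simp: ww_Suc, simp add: ww_def)

lemma ww_prefix: "\<exists>v. ww (Suc k) = ww k @ v"
proof (induction k)
  case 0 then show ?case by (simp add: ww_def h_word_def)
next
  case (Suc k)
  then obtain v where "ww (Suc k) = ww k @ v" by blast
  then have "ww (Suc (Suc k)) = ww (Suc k) @ h_word v"
    by (simp add: ww_Suc h_word_append)
  then show ?case by blast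
qed

lemma ww_nth_mono: "k \<le> k' \<Longrightarrow> n < 11 ^ k \<Longrightarrow> ww k' ! n = ww k ! n"
proof (induction k')
  case 0 then show ?case by simp
next
  case (Suc k')
  show ?case
  proof (cases "k = Suc k'")
    case True then show ?thesis by simp
  next
    case False
    then have kk: "k \<le> k'" using Suc by simp
    obtain v where "ww (Suc k') = ww k' @ v" using ww_prefix by blast
    moreover have pk: "(11::nat) ^ k \<le> 11 ^ k'" using kk by (rule power_increasing) simp
    have "n < length (ww k')" using order_less_le_trans[OF Suc(3) pk] len_ww by simp
    ultimately show ?thesis using Suc kk by (simp add: nth_append)
  qed
qed

lemma n_less_pow: "n < (11::nat) ^ n"
proof -
  have "n < 2 ^ n" by (rule less_exp)
  also have "(2::nat) ^ n \<le> 11 ^ n" by (rule power_mono) auto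
  finally show ?thesis .
qed

lemma n_less_pow_Suc: "n < (11::nat) ^ Suc n"
  using n_less_pow[of n] by simp

lemma h_fix_ww: "n < 11 ^ k \<Longrightarrow> h_fix n = ww k ! n"
proof -
  assume a: "n < 11 ^ k"
  have b: "n < 11 ^ Suc n" by (rule n_less_pow_Suc)
  have "h_fix n = ww (Suc n) ! n" by (simp add: h_fix_def ww_def)
  also have "\<dots> = ww (max k (Suc n)) ! n" using ww_nth_mono[OF _ b, of "max k (Suc n)"] by simp
  also have "\<dots> = ww k ! n" using ww_nth_mono[OF _ a, of "max k (Suc n)"] by simp
  finally show ?thesis .
qed

lemma set_h_letter: "set (h_letter a) \<subseteq> {0..<4}"
  by auto

lemma set_ww: "set (ww k) \<subseteq> {0..<4}"
proof (induction k)
  case 0 then show ?case by (simp add: ww_def)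
next
  case (Suc k)
  have "set (h_word w) \<subseteq> {0..<4}" for w
    by (induction w) (use set_h_letter in auto)
  then show ?case by (simp add: ww_Suc)
qed

lemma X_lt4: "h_fix n < 4"
proof -
  have "n < 11 ^ Suc n" by (rule n_less_pow_Suc)
  then have "h_fix n = ww (Suc n) ! n" "n < length (ww (Suc n))" by (auto simp: h_fix_ww len_ww)
  then show ?thesis using set_ww[of "Suc n"] nth_mem by fastforce
qed

lemma h_letter_nth: "a < 4 \<Longrightarrow> j < 11 \<Longrightarrow> h_letter a ! j = (a + cc ! j) mod 4"
proof -
  assume "a < 4" "j < 11"
  then have "a \<in> {0,1,2,3}" "j \<in> {0,1,2,3,4,5,6,7,8,9,10}" by (auto simp: less_Suc_eq numeral_eq_Suc)
  then show ?thesis unfolding cc_def by (elim insertE; simp)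
qed

lemma X_rec: "j < 11 \<Longrightarrow> h_fix (11*t + j) = (h_fix t + cc ! j) mod 4"
proof -
  assume j: "j < 11"
  have t: "t < 11 ^ Suc t" by (rule n_less_pow_Suc)
  have "11*t + j < 11 ^ Suc (Suc t)" using t j by simp
  then have "h_fix (11*t+j) = ww (Suc (Suc t)) ! (11*t+j)" by (rule h_fix_ww)
  also have "\<dots> = h_letter (ww (Suc t) ! t) ! j"
    using nth_h_word[of t "ww (Suc t)" j] t j by (simp add: ww_Suc len_ww)
  also have "ww (Suc t) ! t = h_fix t" using h_fix_ww[OF t] by simp
  finally show ?thesis using h_letter_nth[OF X_lt4 j] by simp
qed

definition g :: "nat \<Rightarrow> nat" where "g u = (cc!(u div 11) + cc!(u mod 11)) mod 4"
definition V :: "nat \<Rightarrow> nat \<Rightarrow> nat" where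
  "V e u = (if u < 121 then g u else (e + g (u-121)) mod 4)"

definition chk :: bool where
  "chk = list_all (\<lambda>s. list_all (\<lambda>e. list_all (\<lambda>m. \<not> list_all (\<lambda>j. V e (s+j) = V e (s+j+2*m)) [0..<m])
      ([5..<11] @ [12..<22])) [0..<4]) [0..<121]"

definition rchk :: bool where
  "rchk = list_all (\<lambda>r. list_all (\<lambda>A. list_all (\<lambda>B. list_all (\<lambda>C. \<not> list_all (\<lambda>j.
     (A + cc!j) mod 4 = (if j+r<11 then (B + cc!(j+r)) mod 4 else (C + cc!(j+r-11)) mod 4)) [0..<11])
     [0..<4]) [0..<4]) [0..<4]) [1..<11]"





lemma rchk_true: rchk
  by code_simp

lemma chk_true: chk
  by code_simp

lemma chk_unf: "s < 121 \<Longrightarrow> e < 4 \<Longrightarrow> 5 \<le> m \<Longrightarrow> m \<le> 21 \<Longrightarrow> m \<noteq> 11 \<Longrightarrow>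
   \<not> (\<forall>j<m. V e (s+j) = V e (s+j+2*m))"
proof -
  assume a: "s < 121" "e < 4" "5 \<le> m" "m \<le> 21" "m \<noteq> 11"
  have "m \<in> set ([5..<11] @ [12..<22])" using a by (simp only: set_append set_upt) auto
  moreover have "s \<in> set [0..<121]" "e \<in> set [0..<4]" using a by auto
  ultimately obtain j where j: "j \<in> set [0..<m]" and nq: "V e (s+j) \<noteq> V e (s+j+2*m)"
    using chk_true unfolding chk_def list_all_iff by blast
  from j have "j < m" by simp
  then show ?thesis using nq by blast
qed

lemma rchk_unf: "0 < r \<Longrightarrow> r < 11 \<Longrightarrow> A < 4 \<Longrightarrow> B < 4 \<Longrightarrow> C < 4 \<Longrightarrow>
   \<not> (\<forall>j<11. (A + cc!j) mod 4 = (if j+r<11 then (B + cc!(j+r)) mod 4 else (C + cc!(j+r-11)) mod 4))"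
proof -
  assume a: "0 < r" "r < 11" "A < 4" "B < 4" "C < 4"
  then have "r \<in> set [1..<11]" "A \<in> set [0..<4]" "B \<in> set [0..<4]" "C \<in> set [0..<4]" by auto
  then obtain j where j: "j \<in> set [0..<11]" and
    nq: "(A + cc!j) mod 4 \<noteq> (if j+r<11 then (B + cc!(j+r)) mod 4 else (C + cc!(j+r-11)) mod 4)"
    using rchk_true unfolding rchk_def list_all_iff by blast
  from j have "j < 11" by simp
  then show ?thesis using nq by blast
qed

lemma X_mul11: "h_fix (11*t) = h_fix t"
  using X_rec[of 0 t] X_lt4[of t] by (simp add: cc_def)

lemma X121: "u < 121 \<Longrightarrow> h_fix (121*T + u) = (h_fix T + g u) mod 4"
proof -
  assume u: "u < 121"
  have d: "u div 11 < 11" using u by simp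
  have eq: "121*T + u = 11*(11*T + u div 11) + u mod 11" by simp
  have "h_fix (121*T + u) = (h_fix (11*T + u div 11) + cc!(u mod 11)) mod 4"
    unfolding eq by (rule X_rec) simp
  also have "\<dots> = ((h_fix T + cc!(u div 11)) mod 4 + cc!(u mod 11)) mod 4"
    using X_rec[OF d] by simp
  also have "\<dots> = (h_fix T + g u) mod 4"
    unfolding g_def by (simp add: mod_add_left_eq mod_add_right_eq add.assoc)
  finally show ?thesis .
qed

lemma XV: "u < 242 \<Longrightarrow> h_fix (121*T + u) = (h_fix T + V ((h_fix (T+1) + 4 - h_fix T) mod 4) u) mod 4"
proof -
  assume u: "u < 242"
  show ?thesis
  proof (cases "u < 121")
    case True then show ?thesis using X121 by (simp add: V_def)
  next
    case False
    let ?A = "h_fix T" and ?D = "h_fix (T+1)"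
    have A: "?A < 4" by (rule X_lt4)
    have "121*T + u = 121*(T+1) + (u - 121)" using False by simp
    then have "h_fix (121*T + u) = (?D + g (u-121)) mod 4" using X121[of "u-121" "T+1"] u False by simp
    also have "\<dots> = (?A + ((?D + 4 - ?A) mod 4 + g (u-121)) mod 4) mod 4"
    proof -
      have "(?A + ((?D + 4 - ?A) mod 4 + g (u-121)) mod 4) mod 4 = (?A + ((?D + 4 - ?A) + g (u-121))) mod 4"
        by (simp add: mod_add_left_eq mod_add_right_eq)
      also have "?A + ((?D + 4 - ?A) + g (u-121)) = (?D + g (u-121)) + 4" using A by simp
      finally show ?thesis by simp
    qed
    finally show ?thesis using False by (simp add: V_def)
  qed
qed

lemma V_lt4: "V e u < 4" by (simp add: V_def g_def)

lemma mod_cancel4_aux: "(r::nat) < 4 \<Longrightarrow> v1 < 4 \<Longrightarrow> v2 < 4 \<Longrightarrow> (r + v1) mod 4 = (r + v2) mod 4 \<Longrightarrow> v1 = v2"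
proof -
  assume "r < 4" "v1 < 4" "v2 < 4" "(r + v1) mod 4 = (r + v2) mod 4"
  moreover have "r \<in> {0,1,2,3}" "v1 \<in> {0,1,2,3}" "v2 \<in> {0,1,2,3}" using calculation by auto
  ultimately show ?thesis by auto
qed

lemma mod_cancel4: "(a + (v1::nat)) mod 4 = (a + v2) mod 4 \<Longrightarrow> v1 < 4 \<Longrightarrow> v2 < 4 \<Longrightarrow> v1 = v2"
proof -
  assume h: "(a + (v1::nat)) mod 4 = (a + v2) mod 4" "v1 < 4" "v2 < 4"
  have "(a mod 4 + v1) mod 4 = (a mod 4 + v2) mod 4" using h(1) by (simp add: mod_add_left_eq)
  then show ?thesis using mod_cancel4_aux[of "a mod 4" v1 v2] h by simp
qed

lemma base_case:
  assumes "5 \<le> m" "m \<le> 21" "m \<noteq> 11" and P: "\<forall>j<m. h_fix (i+j) = h_fix (i+j+2*m)"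
  shows False
proof -
  define T where "T = i div 121"
  define s where "s = i mod 121"
  define e where "e = (h_fix (T+1) + 4 - h_fix T) mod 4"
  have i: "i = 121*T + s" unfolding T_def s_def by simp
  have s: "s < 121" unfolding s_def by simp
  have e: "e < 4" unfolding e_def by simp
  have "\<forall>j<m. V e (s+j) = V e (s+j+2*m)"
  proof (intro allI impI)
    fix j assume j: "j < m"
    have "h_fix (121*T + (s+j)) = h_fix (121*T + (s+j+2*m))"
      using P j i by (simp add: add.assoc)
    then have "(h_fix T + V e (s+j)) mod 4 = (h_fix T + V e (s+j+2*m)) mod 4"
      using XV[of "s+j" T] XV[of "s+j+2*m" T] s j assms(2) unfolding e_def by simp
    then show "V e (s+j) = V e (s+j+2*m)" using mod_cancel4 V_lt4 by blast
  qed
  then show False using chk_unf[OF s e assms(1-3)] by blast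
qed

lemma block_step:
  assumes m22: "22 \<le> m" and P: "\<forall>j<m. h_fix (i+j) = h_fix (i+j+2*m)"
  shows "\<exists>M. m = 11*M \<and> (\<forall>j<M. h_fix ((i+10) div 11 + j) = h_fix ((i+10) div 11 + j + 2*M))"
proof -
  define a where "a = i div 11 + 1"
  define Q where "Q = (2*m) div 11"
  define r where "r = (2*m) mod 11"
  have Qr: "2*m = 11*Q + r" unfolding Q_def r_def by simp
  have r11: "r < 11" unfolding r_def by simp
  have ai: "i < 11*a" "11*a \<le> i + 11" unfolding a_def by auto
  have H: "\<forall>j<11. (h_fix a + cc!j) mod 4 = (if j+r<11 then (h_fix (a+Q) + cc!(j+r)) mod 4
              else (h_fix (a+Q+1) + cc!(j+r-11)) mod 4)"
  proof (intro allI impI)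
    fix j :: nat assume j: "j < 11"
    define n where "n = 11*a + j"
    have n1: "n = i + (n - i)" and n2: "n - i < m" using ai j m22 unfolding n_def by auto
    have "h_fix n = h_fix (n + 2*m)" using P n2 n1 by metis
    moreover have "h_fix n = (h_fix a + cc!j) mod 4" unfolding n_def using X_rec[OF j] by simp
    moreover have "h_fix (n + 2*m) = (if j+r<11 then (h_fix (a+Q) + cc!(j+r)) mod 4
              else (h_fix (a+Q+1) + cc!(j+r-11)) mod 4)"
    proof (cases "j + r < 11")
      case True
      have "n + 2*m = 11*(a+Q) + (j+r)" unfolding n_def using Qr by simp
      then show ?thesis using X_rec[OF True, of "a+Q"] True by simp
    next
      case False
      have jr: "j + r - 11 < 11" using j r11 by simp
      have "n + 2*m = 11*(a+Q+1) + (j+r-11)" unfolding n_def using Qr False by simp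
      then show ?thesis using X_rec[OF jr, of "a+Q+1"] False by simp
    qed
    ultimately show "(h_fix a + cc!j) mod 4 = (if j+r<11 then (h_fix (a+Q) + cc!(j+r)) mod 4
              else (h_fix (a+Q+1) + cc!(j+r-11)) mod 4)" by simp
  qed
  have r0: "r = 0"
  proof (rule ccontr)
    assume "r \<noteq> 0"
    then show False using rchk_unf[of r "h_fix a" "h_fix (a+Q)" "h_fix (a+Q+1)"] r11 X_lt4 H by auto
  qed
  then have "2*m = 11*Q" using Qr by simp
  then have "m = 11*(m div 11) \<and> Q = 2*(m div 11)" by presburger
  then obtain M where M: "m = 11*M" "Q = 2*M" by blast
  define a' where "a' = (i+10) div 11"
  have a'i: "i \<le> 11*a'" "11*a' \<le> i + 10" unfolding a'_def by auto
  have "\<forall>j<M. h_fix (a' + j) = h_fix (a' + j + 2*M)"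
  proof (intro allI impI)
    fix j assume j: "j < M"
    define n where "n = 11*(a'+j)"
    have n1: "n = i + (n - i)" and n2: "n - i < m" using a'i j M unfolding n_def by auto
    have "h_fix n = h_fix (n + 2*m)" using P n2 n1 by metis
    moreover have "n + 2*m = 11*(a'+j+2*M)" unfolding n_def using M by simp
    ultimately have "h_fix (11*(a'+j)) = h_fix (11*(a'+j+2*M))" unfolding n_def by simp
    then show "h_fix (a' + j) = h_fix (a' + j + 2*M)" by (simp only: X_mul11)
  qed
  then show ?thesis using M unfolding a'_def by blast
qed

lemma main_lem:
  "\<forall>i. (\<forall>j<m. h_fix (i+j) = h_fix (i+j+2*m)) \<longrightarrow> 1 \<le> m \<longrightarrow> (\<exists>a\<in>{1,2,3,4::nat}. \<exists>k::nat. m = a * 11^k)"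
proof (induction m rule: less_induct)
  case (less m)
  show ?case
  proof (intro allI impI)
    fix i assume P: "\<forall>j<m. h_fix (i+j) = h_fix (i+j+2*m)" and m1: "1 \<le> m"
    show "\<exists>a\<in>{1,2,3,4::nat}. \<exists>k::nat. m = a * 11^k"
    proof (cases "m \<le> 4")
      case True
      then have "m \<in> {1,2,3,4}" using m1 by auto
      then show ?thesis by (intro bexI[of _ m] exI[of _ 0]) auto
    next
      case False
      show ?thesis
      proof (cases "m = 11")
        case True then show ?thesis by (intro bexI[of _ 1] exI[of _ 1]) auto
      next
        case m11: False
        show ?thesis
        proof (cases "m \<le> 21")
          case True
          then show ?thesis using base_case[of m i] False m11 P by simp
        next
          case m22: False
          obtain M where M: "m = 11*M" and PM: "\<forall>j<M. h_fix ((i+10) div 11 + j) = h_fix ((i+10) div 11 + j + 2*M)"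
            using block_step[of m i] m22 P by auto
          have "M < m" "1 \<le> M" using M m22 by auto
          then obtain a k where a: "a \<in> {1,2,3,4::nat}" and "M = a * 11^k" using less PM by blast
          then have "m = a * 11^(Suc k)" using M by simp
          then show ?thesis using a by blast
        qed
      qed
    qed
  qed
qed

theorem mainTheorem9:
  fixes i p q :: nat
  assumes "q \<ge> 1" and "p > q" and "2 * p = 3 * q"
    and "factor_has_period h_fix i p q"
  shows "\<exists>a \<in> {3, 6, 9, 12::nat}. \<exists>k::nat. p = a * 11 ^ k"
proof -
  have "q = 2*(q div 2) \<and> p = 3*(q div 2)" using assms(3) by presburger
  then obtain m where m: "q = 2*m" "p = 3*m" by blast
  have m1: "1 \<le> m" using assms(1) m by simp
  have "\<forall>j<m. h_fix (i+j) = h_fix (i+j+2*m)"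
    using assms(4) m unfolding factor_has_period_def by auto
  then obtain a k where a: "a \<in> {1,2,3,4::nat}" and "m = a * 11^k" using main_lem m1 by blast
  then have "p = (3*a) * 11^k" using m by simp
  moreover have "3*a \<in> {3,6,9,12}" using a by auto
  ultimately show ?thesis by blast
qed

end
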